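(* Let $G$ be a connected edge-stable equimatchable graph with at least $3$ vertices. Then $\nu(G)=\nu(G\setminus e)$ for every $e\in E(G)$.
   Context: All graphs are finite and simple. A graph is equimatchable if all its maximal matchings have the same cardinality; an equimatchable graph $G$ is edge-stable if $G\setminus e$ (delete edge $e$, keep vertices) is equimatchable for every $e\in E(G)$. $\nu(H)$ is the maximum size of a matching of $H$. *)

theory Defs
  imports Main
begin

definition graph :: "'a set \<Rightarrow> 'a set set \<Rightarrow> bool" where
  "graph V E \<longleftrightarrow> finite V \<and> (\<forall>e\<in>E. e \<subseteq> V \<and> card e = 2)"

definition matching :: "'a set set \<Rightarrow> 'a set set \<Rightarrow> bool" where
  "matching E M \<longleftrightarrow> M \<subseteq> E \<and> (\<forall>e1\<in>M. \<forall>e2\<in>M. e1 \<noteq> e2 \<longrightarrow> e1 \<inter> e2 = {})"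

definition maximal_matching :: "'a set set \<Rightarrow> 'a set set \<Rightarrow> bool" where
  "maximal_matching E M \<longleftrightarrow> matching E M \<and> (\<forall>M'. matching E M' \<and> M \<subseteq> M' \<longrightarrow> M' = M)"

text \<open>Matching number nu(G): maximum size of a matching (E finite).\<close>
definition matching_number :: "'a set set \<Rightarrow> nat" where
  "matching_number E = Max (card ` {M. matching E M})"

definition equimatchable :: "'a set set \<Rightarrow> bool" where
  "equimatchable E \<longleftrightarrow>
     (\<forall>M1 M2. maximal_matching E M1 \<and> maximal_matching E M2 \<longrightarrow> card M1 = card M2)"

text \<open>G minus e keeps the vertices; only the edge set changes.\<close>
definition edge_stable :: "'a set set \<Rightarrow> bool" where
  "edge_stable E \<longleftrightarrow> equimatchable E \<and> (\<forall>e\<in>E. equimatchable (E - {e}))"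

definition connected :: "'a set \<Rightarrow> 'a set set \<Rightarrow> bool" where
  "connected V E \<longleftrightarrow>
     (\<forall>u\<in>V. \<forall>v\<in>V. (u, v) \<in> {(x, y). {x, y} \<in> E}\<^sup>*)"

end

theory Submission
  imports Defs
begin

lemma fin_match_set:
  assumes "finite E"
  shows "finite {M. matching E M}" "{M. matching E M} \<noteq> {}"
proof -
  have "{M. matching E M} \<subseteq> Pow E" by (auto simp: matching_def)
  then show "finite {M. matching E M}" using assms finite_subset by blast
  have "matching E {}" by (simp add: matching_def)
  then show "{M. matching E M} \<noteq> {}" by blast
qed

lemma card_le_mn:
  assumes "finite E" "matching E M"
  shows "card M \<le> matching_number E"
  unfolding matching_number_def
  using fin_match_set[OF assms(1)] assms(2) by (intro Max_ge) auto

lemma mn_attained: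
  assumes "finite E"
  obtains M where "matching E M" "card M = matching_number E"
proof -
  have "matching_number E \<in> card ` {M. matching E M}"
    unfolding matching_number_def using fin_match_set[OF assms] by (intro Max_in) auto
  then obtain M where "M \<in> {M. matching E M}" "matching_number E = card M" by (rule imageE)
  then show ?thesis using that by simp
qed

lemma extend_maximal:
  assumes "finite E" "matching E M"
  obtains M' where "M \<subseteq> M'" "maximal_matching E M'"
proof -
  let ?P = "\<lambda>X. matching E X \<and> M \<subseteq> X"
  have b: "\<forall>y. ?P y \<longrightarrow> card y < card E + 1"
  proof (intro allI impI)
    fix y assume "?P y"
    then have "y \<subseteq> E" by (simp add: matching_def)
    then have "card y \<le> card E" by (rule card_mono[OF assms(1)])
    then show "card y < card E + 1" by simp
  qed
  have P0: "?P M" using assms(2) by simp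
  have "\<exists>x. ?P x \<and> (\<forall>y. ?P y \<longrightarrow> card y \<le> card x)"
    by (rule Lattices_Big.ex_has_greatest_nat[OF P0 b])
  then obtain X where X1: "?P X" and X2: "\<forall>y. ?P y \<longrightarrow> card y \<le> card X"
    by blast
  have "maximal_matching E X"
    unfolding maximal_matching_def
  proof (intro conjI allI impI)
    show "matching E X" using X1 by simp
    fix M' assume a: "matching E M' \<and> X \<subseteq> M'"
    have sub: "M' \<subseteq> E" using a by (simp add: matching_def)
    have fin: "finite M'" by (rule finite_subset[OF sub assms(1)])
    have "?P M'" using a X1 by blast
    then have le1: "card M' \<le> card X" using X2 by blast
    have le2: "card X \<le> card M'" using a fin by (simp add: card_mono)
    have "X = M'" using card_subset_eq[OF fin, of X] a le1 le2 by simp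
    then show "M' = X" by simp
  qed
  then show ?thesis using that X1 by blast
qed

theorem proposition2p1:
  fixes V :: "'a set" and E :: "'a set set"
  assumes "graph V E"
    and "connected V E"
    and "edge_stable E"
    and "card V \<ge> 3"
  shows "\<forall>e\<in>E. matching_number E = matching_number (E - {e})"
proof
  fix e assume eE: "e \<in> E"
  have fV: "finite V" using assms(1) by (simp add: graph_def)
  have fE: "finite E"
  proof -
    have "E \<subseteq> Pow V" using assms(1) by (auto simp: graph_def)
    then show ?thesis using fV finite_subset by blast
  qed
  have fE': "finite (E - {e})" using fE by simp
  have eq: "equimatchable E" using assms(3) by (simp add: edge_stable_def)
  have cE: "card e = 2" "e \<subseteq> V" using assms(1) eE by (auto simp: graph_def)
  then obtain u v where uv: "e = {u, v}" "u \<noteq> v" unfolding card_2_iff by blast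
  have "\<not> V \<subseteq> {u, v}"
  proof
    assume "V \<subseteq> {u, v}"
    then have "card V \<le> card {u, v}" by (intro card_mono) auto
    also have "\<dots> \<le> 2" by (simp add: card_insert_le_m1)
    finally show False using assms(4) by simp
  qed
  then obtain w where w: "w \<in> V" "w \<notin> {u, v}" by blast
  then have w2: "w \<notin> e" using uv(1) by simp
  have uV: "u \<in> V" using cE uv by auto
  have path: "(u, w) \<in> {(x, y). {x, y} \<in> E}\<^sup>*"
    using assms(2) uV w(1) by (simp add: connected_def)
  have key: "\<And>z. (u, z) \<in> {(x, y). {x, y} \<in> E}\<^sup>* \<Longrightarrow>
      z \<in> e \<or> (\<exists>f\<in>E. f \<noteq> e \<and> f \<inter> e \<noteq> {})"
  proof -
    fix z assume "(u, z) \<in> {(x, y). {x, y} \<in> E}\<^sup>*"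
    then show "z \<in> e \<or> (\<exists>f\<in>E. f \<noteq> e \<and> f \<inter> e \<noteq> {})"
    proof (induction rule: rtrancl_induct)
      case base then show ?case using uv by simp
    next
      case (step y z)
      show ?case
      proof (cases "y \<in> e \<and> z \<notin> e")
        case True
        then have "{y, z} \<noteq> e" "{y, z} \<inter> e \<noteq> {}" by auto
        moreover have "{y, z} \<in> E" using step(2) by simp
        ultimately show ?thesis by blast
      next
        case False then show ?thesis using step(3) by auto
      qed
    qed
  qed
  have "\<exists>f\<in>E. f \<noteq> e \<and> f \<inter> e \<noteq> {}" using key[OF path] w2 by simp
  then obtain f where f: "f \<in> E" "f \<noteq> e" "f \<inter> e \<noteq> {}" by blast
  have "matching E {f}" using f by (simp add: matching_def)
  then obtain M where M: "{f} \<subseteq> M" "maximal_matching E M"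
    by (rule extend_maximal[OF fE])
  have Mm: "matching E M" using M by (simp add: maximal_matching_def)
  have "e \<notin> M"
  proof
    assume "e \<in> M"
    have disj: "\<forall>e1\<in>M. \<forall>e2\<in>M. e1 \<noteq> e2 \<longrightarrow> e1 \<inter> e2 = {}"
      using Mm by (simp add: matching_def)
    have "f \<in> M" using M(1) by simp
    then have "f \<inter> e = {}" using disj \<open>e \<in> M\<close> f(2) by blast
    then show False using f(3) by simp
  qed
  then have Me: "matching (E - {e}) M" using Mm unfolding matching_def by blast
  obtain M0 where M0: "matching E M0" "card M0 = matching_number E"
    using mn_attained[OF fE] by blast
  have M0max: "maximal_matching E M0"
    unfolding maximal_matching_def
  proof (intro conjI allI impI)
    show "matching E M0" by fact
    fix M' assume a: "matching E M' \<and> M0 \<subseteq> M'"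
    have subM: "M' \<subseteq> E" using a by (simp add: matching_def)
    have finM: "finite M'" by (rule finite_subset[OF subM fE])
    have le1: "card M' \<le> card M0" using card_le_mn[OF fE] a M0(2) by simp
    have le2: "card M0 \<le> card M'" using a finM by (simp add: card_mono)
    have "M0 = M'" using card_subset_eq[OF finM, of M0] a le1 le2 by simp
    then show "M' = M0" by simp
  qed
  have "card M = card M0" using eq M(2) M0max unfolding equimatchable_def by blast
  then have cM: "card M = matching_number E" using M0(2) by simp
  have ge: "matching_number E \<le> matching_number (E - {e})"
    using card_le_mn[OF fE' Me] cM by simp
  obtain M1 where M1: "matching (E - {e}) M1" "card M1 = matching_number (E - {e})"
    using mn_attained[OF fE'] by blast
  have "matching E M1" using M1(1) unfolding matching_def by blast
  then have "card M1 \<le> matching_number E" by (rule card_le_mn[OF fE])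
  then have "matching_number (E - {e}) \<le> matching_number E" using M1(2) by simp
  then show "matching_number E = matching_number (E - {e})" using ge by simp
qed

end
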